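(* An undirected graph $G=(V,E)$ is a Generalized Bartlett graph if and only if $G$ has a decomposable cover $\widetilde G=(V,\widetilde E)$ such that every triangle in $\widetilde E$ contains an edge from $E$; i.e., for any $u,v,w\in V$ with $\{u,v\},\{v,w\},\{u,w\}\in\widetilde E$, at least one of $\{u,v\},\{v,w\},\{u,w\}$ belongs to $E$.
   Context: A graph is decomposable if it has no induced cycle of length $\ge4$; a decomposable cover of $G=(V,E)$ is a decomposable graph $(V,\widetilde E)$ with $E\subset\widetilde E$. For an ordering $\sigma:V\to\{1,\dots,p\}$ ($p=|V|$), set $E^\sigma_0=E$ and for $i=1,\dots,p-2$, $E^\sigma_i=E^\sigma_{i-1}\cup\{\{u,v\}:u\ne v,\sigma(u)>i,\sigma(v)>i,\{u,\sigma^{-1}(i)\},\{v,\sigma^{-1}(i)\}\in E^\sigma_{i-1}\}$; $D^\sigma(E)=E^\sigma_{p-2}$. $G$ is a Generalized Bartlett graph if there exists an ordering $\sigma$ such that there are no $u,v,w\in V$ with $\{u,v\},\{v,w\},\{u,w\}\notin E$ but $\{u,v\},\{v,w\},\{u,w\}\in D^\sigma(E)$. *)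

theory Defs
  imports Main
begin

definition is_graph :: "'a set \<Rightarrow> 'a set set \<Rightarrow> bool" where
  "is_graph V E \<longleftrightarrow> finite V \<and> (\<forall>e\<in>E. e \<subseteq> V \<and> card e = 2)"

definition induced_cycle :: "'a set \<Rightarrow> 'a set set \<Rightarrow> 'a list \<Rightarrow> bool" where
  "induced_cycle V E cs \<longleftrightarrow>
     (let n = length cs in
       n \<ge> 4 \<and> distinct cs \<and> set cs \<subseteq> V \<and>
       (\<forall>i<n. {cs ! i, cs ! ((i + 1) mod n)} \<in> E) \<and>
       (\<forall>i<n. \<forall>j<n. {cs ! i, cs ! j} \<in> E \<longrightarrow>
            (i + 1) mod n = j \<or> (j + 1) mod n = i))"

definition decomposable :: "'a set \<Rightarrow> 'a set set \<Rightarrow> bool" where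
  "decomposable V E \<longleftrightarrow> is_graph V E \<and> (\<nexists>cs. induced_cycle V E cs)"

definition decomposable_cover :: "'a set \<Rightarrow> 'a set set \<Rightarrow> 'a set set \<Rightarrow> bool" where
  "decomposable_cover V E Et \<longleftrightarrow> decomposable V Et \<and> E \<subseteq> Et"

definition is_ordering :: "'a set \<Rightarrow> ('a \<Rightarrow> nat) \<Rightarrow> bool" where
  "is_ordering V \<sigma> \<longleftrightarrow> bij_betw \<sigma> V {1..card V}"

fun elim_edges :: "'a set \<Rightarrow> ('a \<Rightarrow> nat) \<Rightarrow> 'a set set \<Rightarrow> nat \<Rightarrow> 'a set set" where
  "elim_edges V \<sigma> E 0 = E"
| "elim_edges V \<sigma> E (Suc i) =
     (let Ep = elim_edges V \<sigma> E i; x = inv_into V \<sigma> (Suc i) in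
       Ep \<union> {{u, v} | u v. u \<in> V \<and> v \<in> V \<and> u \<noteq> v \<and> \<sigma> u > Suc i \<and> \<sigma> v > Suc i
                          \<and> {u, x} \<in> Ep \<and> {v, x} \<in> Ep})"

definition D_sigma :: "'a set \<Rightarrow> ('a \<Rightarrow> nat) \<Rightarrow> 'a set set \<Rightarrow> 'a set set" where
  "D_sigma V \<sigma> E = elim_edges V \<sigma> E (card V - 2)"

definition generalized_bartlett :: "'a set \<Rightarrow> 'a set set \<Rightarrow> bool" where
  "generalized_bartlett V E \<longleftrightarrow>
     (\<exists>\<sigma>. is_ordering V \<sigma> \<and>
        \<not> (\<exists>u v w. {u, v} \<notin> E \<and> {v, w} \<notin> E \<and> {u, w} \<notin> E \<and>
                   {u, v} \<in> D_sigma V \<sigma> E \<and> {v, w} \<in> D_sigma V \<sigma> E \<and> {u, w} \<in> D_sigma V \<sigma> E))"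

end

theory Submission
  imports Defs
begin


definition pth :: "'a set set \<Rightarrow> 'a set \<Rightarrow> 'a \<Rightarrow> 'a \<Rightarrow> 'a list \<Rightarrow> bool" where
  "pth Et C s t p \<longleftrightarrow> length p \<ge> 2 \<and> p!0 = s \<and> p!(length p - 1) = t \<and>
     (\<forall>i. Suc i < length p \<longrightarrow> {p!i, p!Suc i} \<in> Et) \<and>
     (\<forall>i. 0 < i \<and> Suc i < length p \<longrightarrow> p!i \<in> C)"

lemma shortcut_edge:
  assumes "pth Et C s t p" "Suc i < j" "j < length p" "{p!i, p!j} \<in> Et"
  shows "pth Et C s t (take (Suc i) p @ drop j p) \<and> length (take (Suc i) p @ drop j p) < length p"
proof -
  let ?q = "take (Suc i) p @ drop j p"
  have L: "length ?q = length p - j + Suc i" using assms by auto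
  have N: "\<And>k. k < length ?q \<Longrightarrow> ?q!k = (if k < Suc i then p!k else p!(k - Suc i + j))"
    using assms by (auto simp: nth_append intro!: arg_cong[where f="nth p"])
  show ?thesis unfolding pth_def
  proof (intro conjI allI impI)
    show "2 \<le> length ?q" using L assms by auto
    show "?q!0 = s" using N[of 0] L assms by (auto simp: pth_def)
    show "?q!(length ?q - 1) = t" using N[of "length ?q - 1"] L assms by (auto simp: pth_def)
    show "length ?q < length p" using L assms by auto
  next
    fix k assume k: "Suc k < length ?q"
    show "{?q!k, ?q!Suc k} \<in> Et"
    proof (cases "Suc k < Suc i")
      case True then show ?thesis using N[of k] N[of "Suc k"] k assms by (auto simp: pth_def)
    next
      case False
      show ?thesis
      proof (cases "k = i")
        case True then show ?thesis using N[of k] N[of "Suc k"] k assms by auto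
      next
        case False
        then have "Suc (k - Suc i + j) < length p" "Suc k - Suc i + j = Suc (k - Suc i + j)"
          using k L \<open>\<not> Suc k < Suc i\<close> by auto
        then show ?thesis using N[of k] N[of "Suc k"] k assms False \<open>\<not> Suc k < Suc i\<close>
          by (auto simp: pth_def)
      qed
    qed
  next
    fix k assume k: "0 < k \<and> Suc k < length ?q"
    show "?q!k \<in> C"
    proof (cases "k < Suc i")
      case True then show ?thesis using N[of k] k assms by (auto simp: pth_def)
    next
      case False
      then have "0 < k - Suc i + j" "Suc (k - Suc i + j) < length p" using k L assms by auto
      then show ?thesis using N[of k] k assms False by (auto simp: pth_def)
    qed
  qed
qed

lemma shortcut_eq:
  assumes "pth Et C s t p" "i < j" "j < length p" "p!i = p!j" "s \<noteq> t"
  shows "pth Et C s t (take i p @ drop j p) \<and> length (take i p @ drop j p) < length p"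
proof -
  let ?q = "take i p @ drop j p"
  have L: "length ?q = length p - j + i" using assms by auto
  have N: "\<And>k. k < length ?q \<Longrightarrow> ?q!k = (if k < i then p!k else p!(k - i + j))"
    using assms by (auto simp: nth_append intro!: arg_cong[where f="nth p"])
  have N2: "?q!k = (if k \<le> i then p!k else p!(k - i + j))" if k: "k < length ?q" for k
    using N[OF k] assms(4) by (cases "k < i"; cases "k = i"; simp)
  have ge2: "2 \<le> length ?q"
  proof (rule ccontr)
    assume "\<not> 2 \<le> length ?q"
    then have "i = 0" "j = length p - 1" using L assms by auto
    then show False using assms by (auto simp: pth_def)
  qed
  show ?thesis unfolding pth_def
  proof (intro conjI allI impI)
    show "2 \<le> length ?q" by (fact ge2)
    show "?q!0 = s" using N2[of 0] ge2 assms by (auto simp: pth_def)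
    have "\<not> length ?q - 1 < i" "length ?q - 1 - i + j = length p - 1" "length ?q - 1 < length ?q"
      using L ge2 assms by auto
    then show "?q!(length ?q - 1) = t" using N[of "length ?q - 1"] assms
      by (auto simp: pth_def)
    show "length ?q < length p" using L assms by auto
  next
    fix k assume k: "Suc k < length ?q"
    show "{?q!k, ?q!Suc k} \<in> Et"
    proof (cases "Suc k \<le> i")
      case True then show ?thesis using N2[of k] N2[of "Suc k"] k assms by (auto simp: pth_def)
    next
      case False
      then have "Suc (k - i + j) < length p" "Suc k - i + j = Suc (k - i + j)"
        using k L by auto
      moreover have "?q!k = p!(k - i + j)" using N2[of k] k \<open>p!i = p!j\<close> False by (cases "k = i") auto
      ultimately show ?thesis using N2[of "Suc k"] k assms False
        by (auto simp: pth_def)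
    qed
  next
    fix k assume k: "0 < k \<and> Suc k < length ?q"
    show "?q!k \<in> C"
    proof (cases "k < i")
      case True then show ?thesis using N[of k] k assms by (auto simp: pth_def)
    next
      case False
      then have "0 < k - i + j" "Suc (k - i + j) < length p" using k L assms by auto
      then show ?thesis using N[of k] k assms False by (auto simp: pth_def)
    qed
  qed
qed

lemma shortest_props:
  assumes "pth Et C s t p" "s \<noteq> t" "\<forall>q. pth Et C s t q \<longrightarrow> length p \<le> length q"
    and noloop: "\<forall>z. {z} \<notin> Et"
  shows "distinct p" and
    "\<And>i j. i < length p \<Longrightarrow> j < length p \<Longrightarrow> {p!i, p!j} \<in> Et \<Longrightarrow> j = Suc i \<or> i = Suc j"
proof -
  show "distinct p"
  proof (rule ccontr)
    assume "\<not> distinct p"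
    then obtain i j where "i < j" "j < length p" "p!i = p!j"
      by (metis distinct_conv_nth linorder_neqE_nat)
    from shortcut_eq[OF assms(1) this assms(2)] assms(3) show False by fastforce
  qed
  fix i j assume ij: "i < length p" "j < length p" "{p!i, p!j} \<in> Et"
  have "i \<noteq> j" using ij noloop by auto
  show "j = Suc i \<or> i = Suc j"
  proof (rule ccontr)
    assume c: "\<not> (j = Suc i \<or> i = Suc j)"
    show False
    proof (cases "i < j")
      case True
      then have "Suc i < j" using c by auto
      from shortcut_edge[OF assms(1) this ij(2) ij(3)] assms(3) show False by fastforce
    next
      case False
      then have "Suc j < i" using c \<open>i\<noteq>j\<close> by auto
      moreover have "{p!j, p!i} \<in> Et" using ij(3) by (simp add: insert_commute)
      ultimately have "pth Et C s t (take (Suc j) p @ drop i p) \<and> length (take (Suc j) p @ drop i p) < length p"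
        using shortcut_edge[OF assms(1) _ ij(1)] by blast
      with assms(3) show False by fastforce
    qed
  qed
qed



lemma cycle_from_path:
  assumes P: "pth Et C s t p" and st: "s \<noteq> t"
    and minp: "\<forall>q. pth Et C s t q \<longrightarrow> length p \<le> length q"
    and noloop: "\<forall>z. {z} \<notin> Et" and nst: "{s,t} \<notin> Et"
    and xs: "{x,s} \<in> Et" and xt: "{x,t} \<in> Et" and xC: "x \<notin> C"
    and xnc: "\<forall>c\<in>C. {x,c} \<notin> Et" and pV: "set p \<subseteq> V" and xV: "x \<in> V"
  shows "induced_cycle V Et (x # p)"
proof -
  have dp: "distinct p" using shortest_props(1)[OF P st minp noloop] .
  have ch: "\<And>i j. i < length p \<Longrightarrow> j < length p \<Longrightarrow> {p!i, p!j} \<in> Et \<Longrightarrow> j = Suc i \<or> i = Suc j"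
    using shortest_props(2)[OF P st minp noloop] by blast
  define m where "m = length p"
  have p0: "p!0 = s" and pl: "p!(m-1) = t" and m2: "m \<ge> 2"
    and pe: "\<And>i. Suc i < m \<Longrightarrow> {p!i, p!Suc i} \<in> Et"
    and pC: "\<And>i. 0 < i \<Longrightarrow> Suc i < m \<Longrightarrow> p!i \<in> C"
    using P unfolding pth_def m_def by auto
  have m3: "m \<ge> 3"
  proof (rule ccontr)
    assume "\<not> m \<ge> 3"
    then have "m = 2" using m2 by auto
    then show False using pe[of 0] p0 pl nst by auto
  qed
  have hm: "Suc (m - Suc 0) = m" using m3 by simp
  have xsne: "x \<noteq> s" using xs noloop by auto
  have xtne: "x \<noteq> t" using xt noloop by auto
  have xnp: "x \<noteq> p!k" if "k < m" for k
  proof (cases "k = 0")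
    case True then show ?thesis using p0 xsne by simp
  next
    case False
    show ?thesis
    proof (cases "k = m - 1")
      case True then show ?thesis using pl xtne by simp
    next
      case False
      then have "p!k \<in> C" using pC[of k] \<open>k \<noteq> 0\<close> that by auto
      then show ?thesis using xC by auto
    qed
  qed
  have xadj: "{x, p!k} \<in> Et \<Longrightarrow> k < m \<Longrightarrow> k = 0 \<or> k = m - 1" for k
  proof (rule ccontr)
    assume a: "{x, p!k} \<in> Et" "k < m" "\<not> (k = 0 \<or> k = m - 1)"
    then have "p!k \<in> C" using pC[of k] by auto
    then show False using xnc a by auto
  qed
  show ?thesis unfolding induced_cycle_def Let_def
  proof (intro conjI allI impI)
    show "4 \<le> length (x # p)" using m3 m_def by simp
    show "distinct (x # p)" using dp xnp by (auto simp: in_set_conv_nth m_def)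
    show "set (x # p) \<subseteq> V" using pV xV by auto
  next
    fix i assume i: "i < length (x # p)"
    show "{(x # p) ! i, (x # p) ! ((i + 1) mod length (x # p))} \<in> Et"
    proof (cases i)
      case 0 then show ?thesis using xs p0 m3 m_def by (cases p) auto
    next
      case (Suc k)
      show ?thesis
      proof (cases "k = m - 1")
        case True
        then have "i + 1 = length (x # p)" using Suc m_def m3 by simp
        then have "(i+1) mod length (x # p) = 0" by simp
        then show ?thesis using Suc True pl xt by (simp add: insert_commute)
      next
        case False
        then have "(i+1) mod length (x # p) = Suc (Suc k)" using Suc m_def i by simp
        then show ?thesis using Suc False pe[of k] i m_def by simp
      qed
    qed
  next
    fix i j assume i: "i < length (x # p)" and j: "j < length (x # p)"
      and e: "{(x # p) ! i, (x # p) ! j} \<in> Et"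
    have L: "length (x # p) = Suc m" using m_def by simp
    show "(i + 1) mod length (x # p) = j \<or> (j + 1) mod length (x # p) = i"
    proof (cases i)
      case 0
      show ?thesis
      proof (cases j)
        case 0 then show ?thesis using e \<open>i = 0\<close> noloop by simp
      next
        case (Suc l)
        then have "l = 0 \<or> l = m - 1" using xadj[of l] e \<open>i = 0\<close> j L by simp
        then show ?thesis using Suc \<open>i = 0\<close> L m3 hm m_def by auto
      qed
    next
      case (Suc k)
      show ?thesis
      proof (cases j)
        case 0
        then have "k = 0 \<or> k = m - 1" using xadj[of k] e Suc i L by (simp add: insert_commute)
        then show ?thesis using Suc \<open>j = 0\<close> L m3 hm m_def by auto
      next
        case (Suc l)
        then have "l = Suc k \<or> k = Suc l" using ch[of k l] e \<open>i = Suc k\<close> i j L m_def by simp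
        then show ?thesis using Suc \<open>i = Suc k\<close> i j L by auto
      qed
    qed
  qed
qed



lemma walk:
  assumes "(a,b) \<in> Rel\<^sup>*" and RE: "\<forall>(u,v)\<in>Rel. {u,v} \<in> Et"
  shows "\<exists>q. q \<noteq> [] \<and> q!0 = a \<and> q!(length q - 1) = b \<and>
     (\<forall>i. Suc i < length q \<longrightarrow> {q!i, q!Suc i} \<in> Et) \<and> set q \<subseteq> {y. (a,y) \<in> Rel\<^sup>*}"
  using assms(1)
proof (induction rule: rtrancl_induct)
  case base
  show ?case by (rule exI[of _ "[a]"]) auto
next
  case (step y z)
  then obtain q where q: "q \<noteq> []" "q!0 = a" "q!(length q - 1) = y"
     "\<forall>i. Suc i < length q \<longrightarrow> {q!i, q!Suc i} \<in> Et" "set q \<subseteq> {y. (a,y) \<in> Rel\<^sup>*}" by blast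
  have yz: "{y,z} \<in> Et" using step(2) RE by auto
  show ?case
  proof (rule exI[of _ "q @ [z]"], intro conjI allI impI)
    show "(q @ [z]) ! 0 = a" using q by (simp add: nth_append)
    show "(q @ [z]) ! (length (q @ [z]) - 1) = z" by simp
    show "set (q @ [z]) \<subseteq> {y. (a, y) \<in> Rel\<^sup>*}" using q step by auto
  next
    fix i assume i: "Suc i < length (q @ [z])"
    show "{(q @ [z]) ! i, (q @ [z]) ! Suc i} \<in> Et"
    proof (cases "Suc i < length q")
      case True then show ?thesis using q by (simp add: nth_append)
    next
      case False
      then have "i = length q - 1" "Suc i = length q" using i q(1) by auto
      then show ?thesis using q yz by (simp add: nth_append)
    qed
  qed simp
qed

lemma sep_clique:
  assumes noloop: "\<forall>z. {z} \<notin> Et" and NC: "\<forall>cs. \<not> induced_cycle V Et cs"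
    and WV: "W \<subseteq> V" and xW: "x \<in> W"
    and R_def: "R = {y\<in>W. y \<noteq> x \<and> {x,y} \<notin> Et}"
    and Rel_def: "Rel = {(a,b). a\<in>R \<and> b\<in>R \<and> {a,b}\<in>Et}"
    and rR: "r \<in> R" and C_def: "C = {y. (r,y) \<in> Rel\<^sup>*}"
    and S: "\<And>s. s \<in> S \<Longrightarrow> s \<in> W \<and> s \<notin> C \<and> (\<exists>c\<in>C. {s,c} \<in> Et)"
  shows "\<And>s. s \<in> S \<Longrightarrow> {x,s} \<in> Et" and "C \<subseteq> R"
    and "\<And>s t. s \<in> S \<Longrightarrow> t \<in> S \<Longrightarrow> s \<noteq> t \<Longrightarrow> {s,t} \<in> Et"
proof -
  show CR: "C \<subseteq> R"
  proof
    fix y assume "y \<in> C"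
    then have "(r,y) \<in> Rel\<^sup>*" using C_def by simp
    then show "y \<in> R" by (induction rule: rtrancl_induct) (use rR Rel_def in auto)
  qed
  show xS: "{x,s} \<in> Et" if sS: "s \<in> S" for s
  proof -
    obtain c where c: "s \<in> W" "s \<notin> C" "c \<in> C" "{s,c} \<in> Et" using S[OF sS] by blast
    have "s \<notin> R"
    proof
      assume "s \<in> R"
      then have "(c,s) \<in> Rel" using c CR Rel_def by (auto simp: insert_commute)
      moreover have "(r,c) \<in> Rel\<^sup>*" using c C_def by auto
      ultimately have "(r,s) \<in> Rel\<^sup>*" by (meson rtrancl.rtrancl_into_rtrancl)
      then show False using c C_def by auto
    qed
    moreover have "s \<noteq> x" using c CR R_def by auto
    ultimately show ?thesis using c R_def by auto
  qed
  fix s t assume sS: "s \<in> S" and tS: "t \<in> S" and st: "s \<noteq> t"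
  show "{s,t} \<in> Et"
  proof (rule ccontr)
    assume nst: "{s,t} \<notin> Et"
    obtain c1 where c1: "s \<in> W" "s \<notin> C" "c1 \<in> C" "{s,c1} \<in> Et" using S[OF sS] by blast
    obtain c2 where c2: "t \<in> W" "t \<notin> C" "c2 \<in> C" "{t,c2} \<in> Et" using S[OF tS] by blast
    have symR: "sym Rel" unfolding Rel_def sym_def by (auto simp: insert_commute)
    have "(r,c1) \<in> Rel\<^sup>*" using c1 C_def by auto
    then have "(c1,r) \<in> Rel\<^sup>*"
      by (metis rtrancl_converseI symR sym_conv_converse_eq)
    moreover have "(r,c2) \<in> Rel\<^sup>*" using c2 C_def by auto
    ultimately have cc: "(c1,c2) \<in> Rel\<^sup>*" by (rule rtrancl_trans)
    have RE: "\<forall>(u,v)\<in>Rel. {u,v} \<in> Et" using Rel_def by auto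
    obtain q where q: "q \<noteq> []" "q!0 = c1" "q!(length q - 1) = c2"
      "\<forall>i. Suc i < length q \<longrightarrow> {q!i, q!Suc i} \<in> Et" "set q \<subseteq> {y. (c1,y) \<in> Rel\<^sup>*}"
      using walk[OF cc RE] by blast
    have qC: "set q \<subseteq> C"
    proof
      fix y assume "y \<in> set q"
      then have "(c1,y) \<in> Rel\<^sup>*" using q by auto
      then have "(r,y) \<in> Rel\<^sup>*" using \<open>(r,c1) \<in> Rel\<^sup>*\<close> by (rule rtrancl_trans[rotated])
      then show "y \<in> C" using C_def by simp
    qed
    let ?p = "s # q @ [t]"
    have "pth Et C s t ?p" unfolding pth_def
    proof (intro conjI allI impI)
      show "2 \<le> length ?p" by simp
      show "?p!0 = s" by simp
      show "?p!(length ?p - 1) = t" by (simp add: nth_append)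
    next
      fix i assume i: "Suc i < length ?p"
      show "{?p!i, ?p!Suc i} \<in> Et"
      proof (cases i)
        case 0 then show ?thesis using q c1 by (cases q) auto
      next
        case (Suc k)
        show ?thesis
        proof (cases "Suc k < length q")
          case True then show ?thesis using q Suc by (simp add: nth_append)
        next
          case False
          then have "k = length q - 1" using i Suc q(1) by auto
          then show ?thesis using q c2 Suc by (simp add: nth_append insert_commute)
        qed
      qed
    next
      fix i assume i: "0 < i \<and> Suc i < length ?p"
      then obtain k where k: "i = Suc k" "k < length q" by (cases i) auto
      then show "?p!i \<in> C" using qC nth_mem[of k q] by (auto simp: nth_append)
    qed
    then obtain p where P: "pth Et C s t p" and minp: "\<forall>q. pth Et C s t q \<longrightarrow> length p \<le> length q"
      using ex_has_least_nat[of "pth Et C s t" _ length] by blast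
    have xnc: "\<forall>c\<in>C. {x,c} \<notin> Et" using CR R_def by auto
    have xC: "x \<notin> C" using CR R_def by auto
    have pV: "set p \<subseteq> V"
    proof
      fix y assume "y \<in> set p"
      then obtain k where k: "k < length p" "p!k = y" by (auto simp: in_set_conv_nth)
      have "y = s \<or> y = t \<or> y \<in> C"
      proof (cases "k = 0")
        case True then show ?thesis using P k by (auto simp: pth_def)
      next
        case False
        show ?thesis
        proof (cases "Suc k = length p")
          case True then have "k = length p - 1" by simp
          then show ?thesis using P k by (auto simp: pth_def)
        next
          case False
          then show ?thesis using P k \<open>k \<noteq> 0\<close> by (auto simp: pth_def)
        qed
      qed
      then show "y \<in> V" using c1 c2 CR R_def WV by auto
    qed
    have "induced_cycle V Et (x # p)"
      by (rule cycle_from_path[OF P st minp noloop nst xS[OF sS] xS[OF tS] xC xnc pV]) (use xW WV in auto)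
    then show False using NC by blast
  qed
qed



definition clq :: "'a set set \<Rightarrow> 'a set \<Rightarrow> bool" where
  "clq Et K \<longleftrightarrow> (\<forall>a\<in>K. \<forall>b\<in>K. a \<noteq> b \<longrightarrow> {a,b} \<in> Et)"

definition simpl :: "'a set set \<Rightarrow> 'a set \<Rightarrow> 'a \<Rightarrow> bool" where
  "simpl Et W v \<longleftrightarrow> v \<in> W \<and> (\<forall>a\<in>W. \<forall>b\<in>W. a \<noteq> b \<and> {v,a} \<in> Et \<and> {v,b} \<in> Et \<longrightarrow> {a,b} \<in> Et)"

lemma simplicial_exists:
  assumes noloop: "\<forall>z. {z} \<notin> Et" and NC: "\<forall>cs. \<not> induced_cycle V Et cs"
  shows "finite W \<Longrightarrow> W \<subseteq> V \<Longrightarrow> K \<subseteq> W \<Longrightarrow> clq Et K \<Longrightarrow> K \<noteq> W \<Longrightarrow> \<exists>v\<in>W-K. simpl Et W v"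
proof (induction "card W" arbitrary: W K rule: less_induct)
  case less
  note fW = less.prems(1) and WV = less.prems(2) and KW = less.prems(3) and cK = less.prems(4)
    and KnW = less.prems(5)
  obtain x where x: "x \<in> W" and xK: "K \<noteq> {} \<Longrightarrow> x \<in> K"
  proof (cases "K = {}")
    case True then show ?thesis using KnW that by blast
  next
    case False then show ?thesis using KW that by blast
  qed
  have Knx: "{x,y} \<in> Et" if "y \<in> K" "y \<noteq> x" for y
  proof -
    have "x \<in> K" using xK that(1) by blast
    then show ?thesis using cK that unfolding clq_def by (metis (no_types, lifting))
  qed
  define R where "R = {y\<in>W. y \<noteq> x \<and> {x,y} \<notin> Et}"
  show ?case
  proof (cases "R = {}")
    case True
    then have adj: "y \<in> W \<Longrightarrow> y \<noteq> x \<Longrightarrow> {x,y} \<in> Et" for y using R_def by blast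
    define W' where "W' = W - {x}"
    define K' where "K' = K - {x}"
    show ?thesis
    proof (cases "W' = K'")
      case True
      have "x \<notin> K"
      proof
        assume "x \<in> K"
        then have "W = K" using True W'_def K'_def x KW by blast
        then show False using KnW by simp
      qed
      then have "K = {}" using xK by blast
      then have "W = {x}" using True W'_def K'_def x by blast
      then have "simpl Et W x" unfolding simpl_def by auto
      then show ?thesis using \<open>x \<notin> K\<close> x by blast
    next
      case False
      have "card W' < card W" using W'_def x fW by (metis card_Diff1_less)
      moreover have "clq Et K'" using cK K'_def unfolding clq_def by blast
      ultimately obtain v where v: "v \<in> W' - K'" "simpl Et W' v"
        using less.hyps[of W' K'] fW WV KW W'_def K'_def False by blast
      have "simpl Et W v"
        unfolding simpl_def
      proof (intro conjI ballI impI)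
        show "v \<in> W" using v W'_def by blast
      next
        fix a b assume ab: "a \<in> W" "b \<in> W" "a \<noteq> b \<and> {v,a} \<in> Et \<and> {v,b} \<in> Et"
        show "{a,b} \<in> Et"
        proof (cases "a = x")
          case True then show ?thesis using adj ab by auto
        next
          case False
          show ?thesis
          proof (cases "b = x")
            case True then show ?thesis using adj ab by (auto simp: insert_commute)
          next
            case False
            then show ?thesis using v ab \<open>a \<noteq> x\<close> W'_def unfolding simpl_def by blast
          qed
        qed
      qed
      moreover have "v \<in> W - K" using v W'_def K'_def by blast
      ultimately show ?thesis by blast
    qed
  next
    case False
    then obtain r where rR: "r \<in> R" by blast
    define Rel where "Rel = {(a,b). a\<in>R \<and> b\<in>R \<and> {a,b}\<in>Et}"
    define C where "C = {y. (r,y) \<in> Rel\<^sup>*}"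
    define S where "S = {s\<in>W. s \<notin> C \<and> (\<exists>c\<in>C. {s,c} \<in> Et)}"
    have Sp: "\<And>s. s \<in> S \<Longrightarrow> s \<in> W \<and> s \<notin> C \<and> (\<exists>c\<in>C. {s,c} \<in> Et)" using S_def by blast
    note sc = sep_clique[OF noloop NC WV x R_def Rel_def rR C_def Sp]
    have CR: "C \<subseteq> R" by (rule sc(2))
    have rC: "r \<in> C" using C_def by simp
    define W2 where "W2 = C \<union> S"
    have W2W: "W2 \<subseteq> W" using CR R_def S_def W2_def by blast
    have xW2: "x \<notin> W2" using CR R_def sc(1) noloop W2_def by fastforce
    have "W2 \<subset> W" using W2W xW2 x by blast
    then have "card W2 < card W" using fW by (rule psubset_card_mono[rotated])
    moreover have "clq Et S" using sc(3) unfolding clq_def by blast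
    moreover have "S \<noteq> W2" using rC S_def W2_def by blast
    ultimately obtain v where v: "v \<in> W2 - S" "simpl Et W2 v"
      using less.hyps[of W2 S] fW W2W WV W2_def by (meson finite_subset order_trans sup_ge2)
    have vC: "v \<in> C" using v W2_def by blast
    have "simpl Et W v"
      unfolding simpl_def
    proof (intro conjI ballI impI)
      show "v \<in> W" using vC CR R_def by blast
    next
      fix a b assume ab: "a \<in> W" "b \<in> W" "a \<noteq> b \<and> {v,a} \<in> Et \<and> {v,b} \<in> Et"
      have "a \<in> W2" using ab vC S_def W2_def by (auto simp: insert_commute)
      moreover have "b \<in> W2" using ab vC S_def W2_def by (auto simp: insert_commute)
      ultimately show "{a,b} \<in> Et" using v ab unfolding simpl_def by blast
    qed
    moreover have "v \<notin> K" using vC CR R_def Knx by blast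
    moreover have "v \<in> W" using vC CR R_def by blast
    ultimately show ?thesis by blast
  qed
qed



lemma peo_exists:
  assumes noloop: "\<forall>z. {z} \<notin> Et" and NC: "\<forall>cs. \<not> induced_cycle V Et cs"
  shows "finite W \<Longrightarrow> W \<subseteq> V \<Longrightarrow> \<exists>\<sigma>. bij_betw \<sigma> W {1..card W} \<and>
    (\<forall>v\<in>W. \<forall>a\<in>W. \<forall>b\<in>W. a \<noteq> b \<and> \<sigma> a > \<sigma> v \<and> \<sigma> b > \<sigma> v \<and> {v,a} \<in> Et \<and> {v,b} \<in> Et \<longrightarrow> {a,b} \<in> Et)"
proof (induction "card W" arbitrary: W rule: less_induct)
  case less
  show ?case
  proof (cases "W = {}")
    case True then show ?thesis by (auto simp: bij_betw_def)
  next
    case False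
    obtain v where v: "v \<in> W" "simpl Et W v"
      using simplicial_exists[OF noloop NC less.prems(1,2), of "{}"] False by (auto simp: clq_def)
    define W' where "W' = W - {v}"
    have cW: "card W = Suc (card W')" using W'_def v less.prems(1) by (metis card_Suc_Diff1)
    then obtain \<tau> where tau: "bij_betw \<tau> W' {1..card W'}"
      "\<forall>v\<in>W'. \<forall>a\<in>W'. \<forall>b\<in>W'. a \<noteq> b \<and> \<tau> a > \<tau> v \<and> \<tau> b > \<tau> v \<and> {v,a} \<in> Et \<and> {v,b} \<in> Et \<longrightarrow> {a,b} \<in> Et"
      using less.hyps[of W'] less.prems W'_def by auto
    define \<sigma> where "\<sigma> u = (if u = v then 1 else Suc (\<tau> u))" for u
    have tr: "u \<in> W' \<Longrightarrow> \<tau> u \<in> {1..card W'}" for u using tau(1) by (auto simp: bij_betw_def)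
    have "inj_on \<sigma> W"
    proof (rule inj_onI)
      fix a b assume ab: "a \<in> W" "b \<in> W" "\<sigma> a = \<sigma> b"
      show "a = b"
      proof (cases "a = v")
        case True then show ?thesis using ab tr[of b] \<sigma>_def W'_def by (auto split: if_splits)
      next
        case aF: False
        show ?thesis
        proof (cases "b = v")
          case True then show ?thesis using ab aF tr[of a] \<sigma>_def W'_def by auto
        next
          case False
          then have "\<tau> a = \<tau> b" using ab aF \<sigma>_def by simp
          moreover have "a \<in> W'" "b \<in> W'" using ab aF False W'_def by auto
          ultimately show ?thesis using bij_betw_imp_inj_on[OF tau(1)] by (meson inj_onD)
        qed
      qed
    qed
    moreover have "\<sigma> ` W = {1..card W}"
    proof
      show "\<sigma> ` W \<subseteq> {1..card W}"
      proof
        fix n assume "n \<in> \<sigma> ` W"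
        then obtain u where u: "u \<in> W" "n = \<sigma> u" by blast
        show "n \<in> {1..card W}"
        proof (cases "u = v")
          case True then show ?thesis using u \<sigma>_def cW by simp
        next
          case False then have "u \<in> W'" using u W'_def by simp
          then show ?thesis using tr[of u] u False \<sigma>_def cW by simp
        qed
      qed
    next
      show "{1..card W} \<subseteq> \<sigma> ` W"
      proof
        fix n assume n: "n \<in> {1..card W}"
        show "n \<in> \<sigma> ` W"
        proof (cases "n = 1")
          case True then show ?thesis using v \<sigma>_def by force
        next
          case False
          then have "n - 1 \<in> {1..card W'}" using n cW by auto
          then obtain u where u: "u \<in> W'" "\<tau> u = n - 1" using tau(1) by (metis bij_betw_iff_bijections)
          then have "\<sigma> u = n" using \<sigma>_def W'_def False n by auto
          then show ?thesis using u W'_def by blast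
        qed
      qed
    qed
    moreover have "\<forall>u\<in>W. \<forall>a\<in>W. \<forall>b\<in>W. a \<noteq> b \<and> \<sigma> a > \<sigma> u \<and> \<sigma> b > \<sigma> u \<and> {u,a} \<in> Et \<and> {u,b} \<in> Et \<longrightarrow> {a,b} \<in> Et"
    proof (intro ballI impI)
      fix u a b assume uab: "u \<in> W" "a \<in> W" "b \<in> W"
        and h: "a \<noteq> b \<and> \<sigma> a > \<sigma> u \<and> \<sigma> b > \<sigma> u \<and> {u,a} \<in> Et \<and> {u,b} \<in> Et"
      show "{a,b} \<in> Et"
      proof (cases "u = v")
        case True then show ?thesis using v(2) uab h unfolding simpl_def by blast
      next
        case False
        then have "a \<noteq> v" "b \<noteq> v" using h \<sigma>_def by auto
        moreover have "\<tau> a > \<tau> u" "\<tau> b > \<tau> u" using h False \<open>a \<noteq> v\<close> \<open>b \<noteq> v\<close> \<sigma>_def by auto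
        moreover have "u \<in> W'" "a \<in> W'" "b \<in> W'" using uab False \<open>a \<noteq> v\<close> \<open>b \<noteq> v\<close> W'_def by auto
        ultimately show ?thesis using tau(2) h by blast
      qed
    qed
    ultimately show ?thesis unfolding bij_betw_def by blast
  qed
qed



lemma elim_step_sub: "elim_edges V \<sigma> E i \<subseteq> elim_edges V \<sigma> E (Suc i)"
  by (auto simp: Let_def)

lemma elim_mono: "i \<le> j \<Longrightarrow> elim_edges V \<sigma> E i \<subseteq> elim_edges V \<sigma> E j"
proof (induction j)
  case 0 then show ?case by simp
next
  case (Suc j)
  show ?case
  proof (cases "i = Suc j")
    case False then have "i \<le> j" using Suc by simp
    then show ?thesis using Suc.IH elim_step_sub by blast
  qed simp
qed

lemma elim_graph: "is_graph V E \<Longrightarrow> e \<in> elim_edges V \<sigma> E i \<Longrightarrow> e \<subseteq> V \<and> card e = 2"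
proof (induction i arbitrary: e)
  case 0 then show ?case by (auto simp: is_graph_def)
next
  case (Suc i)
  then show ?case by (auto simp: Let_def)
qed

lemma elim_new: "e \<in> elim_edges V \<sigma> E j \<Longrightarrow> e \<notin> elim_edges V \<sigma> E i \<Longrightarrow> i \<le> j \<Longrightarrow> z \<in> e \<Longrightarrow> \<sigma> z > Suc i"
proof (induction j arbitrary: e)
  case 0 then show ?case by simp
next
  case (Suc j)
  show ?case
  proof (cases "i = Suc j")
    case True then show ?thesis using Suc by simp
  next
    case False
    then have ij: "i \<le> j" using Suc by simp
    show ?thesis
    proof (cases "e \<in> elim_edges V \<sigma> E j")
      case True then show ?thesis using Suc.IH Suc.prems ij by blast
    next
      case False
      then obtain u v where "e = {u,v}" "\<sigma> u > Suc j" "\<sigma> v > Suc j"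
        using Suc.prems(1) by (auto simp: Let_def)
      then show ?thesis using Suc.prems(4) ij by auto
    qed
  qed
qed

lemma D_chordal:
  assumes G: "is_graph V E" and ord: "is_ordering V \<sigma>"
  shows "\<not> induced_cycle V (D_sigma V \<sigma> E) cs"
proof
  assume ic: "induced_cycle V (D_sigma V \<sigma> E) cs"
  define D where "D = D_sigma V \<sigma> E"
  define n where "n = length cs"
  have n4: "n \<ge> 4" and dcs: "distinct cs" and csV: "set cs \<subseteq> V"
    and cyc: "\<And>i. i < n \<Longrightarrow> {cs!i, cs!((i+1) mod n)} \<in> D"
    and chord: "\<And>i j. i < n \<Longrightarrow> j < n \<Longrightarrow> {cs!i, cs!j} \<in> D \<Longrightarrow> (i+1) mod n = j \<or> (j+1) mod n = i"
    using ic unfolding induced_cycle_def Let_def n_def D_def by auto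
  have bij: "bij_betw \<sigma> V {1..card V}" using ord by (simp add: is_ordering_def)
  have inj: "inj_on \<sigma> V" using bij by (simp add: bij_betw_def)
  have rng: "z \<in> V \<Longrightarrow> \<sigma> z \<in> {1..card V}" for z using bij by (auto simp: bij_betw_def)
  have "0 < n" using n4 by simp
  then obtain k where k: "k < n" and kmin: "\<forall>i. i < n \<longrightarrow> \<sigma> (cs!k) \<le> \<sigma> (cs!i)"
    using ex_has_least_nat[of "\<lambda>i. i < n" 0 "\<lambda>i. \<sigma> (cs!i)"] by blast
  define ia where "ia = (if k + 1 = n then 0 else k + 1)"
  define ib where "ib = (if k = 0 then n - 1 else k - 1)"
  have iamod: "(k+1) mod n = ia" using k ia_def by auto
  have ibmod: "(ib+1) mod n = k" using k ib_def n4 by auto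
  have ian: "ia < n" "ib < n" using ia_def ib_def k n4 by auto
  have ine: "ia \<noteq> k" "ib \<noteq> k" "ia \<noteq> ib" using ia_def ib_def k n4 by auto
  define y where "y = cs!k"
  define a where "a = cs!ia"
  define b where "b = cs!ib"
  have e1: "{y,a} \<in> D" using cyc[OF k] iamod y_def a_def by simp
  have e2: "{y,b} \<in> D" using cyc[OF ian(2)] ibmod y_def b_def by (simp add: insert_commute)
  have nth_in: "i < n \<Longrightarrow> cs!i \<in> V" for i using csV n_def by auto
  have neq: "a \<noteq> b" "a \<noteq> y" "b \<noteq> y" using dcs ine ian k a_def b_def y_def n_def
    by (auto simp: nth_eq_iff_index_eq)
  have yV: "y \<in> V" "a \<in> V" "b \<in> V" using nth_in k ian y_def a_def b_def by auto
  have sa: "\<sigma> a > \<sigma> y"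
  proof -
    have "\<sigma> y \<le> \<sigma> a" using kmin ian y_def a_def by auto
    moreover have "\<sigma> y \<noteq> \<sigma> a" using inj yV neq by (metis inj_onD)
    ultimately show ?thesis by simp
  qed
  have sb: "\<sigma> b > \<sigma> y"
  proof -
    have "\<sigma> y \<le> \<sigma> b" using kmin ian y_def b_def by auto
    moreover have "\<sigma> y \<noteq> \<sigma> b" using inj yV neq by (metis inj_onD)
    ultimately show ?thesis by simp
  qed
  define m where "m = \<sigma> y"
  define p where "p = card V"
  have m1: "1 \<le> m" "m \<le> p" using rng[OF yV(1)] m_def p_def by auto
  show False
  proof (cases "m \<le> p - 2")
    case True
    have DD: "D = elim_edges V \<sigma> E (p - 2)" using D_def p_def by (simp add: D_sigma_def)
    have ya: "{y,a} \<in> elim_edges V \<sigma> E (m - 1)"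
    proof (rule ccontr)
      assume "{y,a} \<notin> elim_edges V \<sigma> E (m - 1)"
      from elim_new[OF e1[unfolded DD] this] True m1 have "\<sigma> y > Suc (m - 1)" by auto
      then show False using m_def m1 by simp
    qed
    have yb: "{y,b} \<in> elim_edges V \<sigma> E (m - 1)"
    proof (rule ccontr)
      assume "{y,b} \<notin> elim_edges V \<sigma> E (m - 1)"
      from elim_new[OF e2[unfolded DD] this] True m1 have "\<sigma> y > Suc (m - 1)" by auto
      then show False using m_def m1 by simp
    qed
    define j where "j = m - 1"
    have jm: "Suc j = m" using m1 j_def by simp
    have inv: "inv_into V \<sigma> (Suc j) = y" using jm m_def inv_into_f_f[OF inj yV(1)] by simp
    have ya': "{a, inv_into V \<sigma> (Suc j)} \<in> elim_edges V \<sigma> E j" using ya inv j_def by (simp add: insert_commute)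
    have yb': "{b, inv_into V \<sigma> (Suc j)} \<in> elim_edges V \<sigma> E j" using yb inv j_def by (simp add: insert_commute)
    have P: "a \<in> V \<and> b \<in> V \<and> a \<noteq> b \<and> \<sigma> a > Suc j \<and> \<sigma> b > Suc j \<and>
       {a, inv_into V \<sigma> (Suc j)} \<in> elim_edges V \<sigma> E j \<and> {b, inv_into V \<sigma> (Suc j)} \<in> elim_edges V \<sigma> E j"
      using ya' yb' yV neq sa sb m_def jm by simp
    have "{a,b} \<in> elim_edges V \<sigma> E (Suc j)"
      unfolding elim_edges.simps Let_def
      apply (rule UnI2)
      apply (rule CollectI)
      apply (rule exI[of _ a])
      apply (rule exI[of _ b])
      using P by simp
    then have "{a,b} \<in> elim_edges V \<sigma> E m" using jm by simp
    then have "{a,b} \<in> D" using DD elim_mono[OF True] by blast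
    then have "(ia+1) mod n = ib \<or> (ib+1) mod n = ia" using chord ian a_def b_def by blast
    moreover have "(ia+1) mod n = (if ia + 1 = n then 0 else ia + 1)" using ian by auto
    ultimately show False using ibmod ine ia_def ib_def k n4 by (auto split: if_splits)
  next
    case False
    have "\<sigma> ` set cs \<subseteq> {p - 1..p}"
    proof
      fix z assume "z \<in> \<sigma> ` set cs"
      then obtain i where i: "i < n" "z = \<sigma> (cs!i)" by (auto simp: in_set_conv_nth n_def)
      have "\<sigma> (cs!i) \<ge> m" using kmin i m_def y_def by auto
      moreover have "\<sigma> (cs!i) \<le> p" using rng[OF nth_in[OF i(1)]] p_def by auto
      ultimately show "z \<in> {p - 1..p}" using False i by auto
    qed
    then have "card (\<sigma> ` set cs) \<le> card {p - 1..p}" by (intro card_mono) auto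
    moreover have "card (\<sigma> ` set cs) = n"
      using card_image[OF inj_on_subset[OF inj csV]] distinct_card[OF dcs] n_def by simp
    moreover have "card {p - 1..p} \<le> 2" by simp
    ultimately show False using n4 by simp
  qed
qed



lemma elim_sub_Et:
  assumes EEt: "E \<subseteq> Et" and bij: "bij_betw \<sigma> V {1..card V}"
    and peo: "\<forall>v\<in>V. \<forall>a\<in>V. \<forall>b\<in>V. a \<noteq> b \<and> \<sigma> a > \<sigma> v \<and> \<sigma> b > \<sigma> v \<and> {v,a} \<in> Et \<and> {v,b} \<in> Et \<longrightarrow> {a,b} \<in> Et"
  shows "i \<le> card V \<Longrightarrow> elim_edges V \<sigma> E i \<subseteq> Et"
proof (induction i)
  case 0 then show ?case using EEt by simp
next
  case (Suc i)
  then have IH: "elim_edges V \<sigma> E i \<subseteq> Et" by simp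
  define x where "x = inv_into V \<sigma> (Suc i)"
  have "Suc i \<in> \<sigma> ` V" using bij Suc.prems by (auto simp: bij_betw_def)
  then have xV: "x \<in> V" and sx: "\<sigma> x = Suc i" using x_def by (auto simp: inv_into_into f_inv_into_f)
  show ?case
  proof
    fix e assume "e \<in> elim_edges V \<sigma> E (Suc i)"
    then have "e \<in> elim_edges V \<sigma> E i \<or> (\<exists>u v. e = {u,v} \<and> u \<in> V \<and> v \<in> V \<and> u \<noteq> v \<and> \<sigma> u > Suc i \<and> \<sigma> v > Suc i
          \<and> {u, x} \<in> elim_edges V \<sigma> E i \<and> {v, x} \<in> elim_edges V \<sigma> E i)"
      unfolding x_def by (simp add: Let_def)
    then show "e \<in> Et"
    proof
      assume "e \<in> elim_edges V \<sigma> E i" then show ?thesis using IH by blast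
    next
      assume "\<exists>u v. e = {u,v} \<and> u \<in> V \<and> v \<in> V \<and> u \<noteq> v \<and> \<sigma> u > Suc i \<and> \<sigma> v > Suc i
          \<and> {u, x} \<in> elim_edges V \<sigma> E i \<and> {v, x} \<in> elim_edges V \<sigma> E i"
      then obtain u v where uv: "e = {u,v}" "u \<in> V" "v \<in> V" "u \<noteq> v" "\<sigma> u > \<sigma> x" "\<sigma> v > \<sigma> x"
          "{x,u} \<in> Et" "{x,v} \<in> Et"
        using IH sx by (auto simp: insert_commute)
      then show ?thesis using peo xV by blast
    qed
  qed
qed

theorem lemma2:
  fixes V :: "'a set" and E :: "'a set set"
  assumes "is_graph V E"
  shows "generalized_bartlett V E \<longleftrightarrow>
    (\<exists>Et. decomposable_cover V E Et \<and>
       (\<forall>u v w. {u, v} \<in> Et \<and> {v, w} \<in> Et \<and> {u, w} \<in> Et \<longrightarrow>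
          {u, v} \<in> E \<or> {v, w} \<in> E \<or> {u, w} \<in> E))"
proof
  assume "generalized_bartlett V E"
  then obtain \<sigma> where ord: "is_ordering V \<sigma>" and nobad:
    "\<not> (\<exists>u v w. {u, v} \<notin> E \<and> {v, w} \<notin> E \<and> {u, w} \<notin> E \<and>
        {u, v} \<in> D_sigma V \<sigma> E \<and> {v, w} \<in> D_sigma V \<sigma> E \<and> {u, w} \<in> D_sigma V \<sigma> E)"
    unfolding generalized_bartlett_def by blast
  have "decomposable_cover V E (D_sigma V \<sigma> E)"
    unfolding decomposable_cover_def decomposable_def is_graph_def
  proof (intro conjI ballI)
    show "finite V" using assms by (simp add: is_graph_def)
    fix e assume "e \<in> D_sigma V \<sigma> E"
    then have "e \<subseteq> V \<and> card e = 2" using elim_graph[OF assms] by (simp add: D_sigma_def)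
    then show "e \<subseteq> V" "card e = 2" by auto
  next
    show "\<nexists>cs. induced_cycle V (D_sigma V \<sigma> E) cs" using D_chordal[OF assms ord] by blast
    show "E \<subseteq> D_sigma V \<sigma> E" using elim_mono[of 0] by (simp add: D_sigma_def) 
  qed
  then show "\<exists>Et. decomposable_cover V E Et \<and>
       (\<forall>u v w. {u, v} \<in> Et \<and> {v, w} \<in> Et \<and> {u, w} \<in> Et \<longrightarrow>
          {u, v} \<in> E \<or> {v, w} \<in> E \<or> {u, w} \<in> E)" using nobad by blast
next
  assume "\<exists>Et. decomposable_cover V E Et \<and>
       (\<forall>u v w. {u, v} \<in> Et \<and> {v, w} \<in> Et \<and> {u, w} \<in> Et \<longrightarrow>
          {u, v} \<in> E \<or> {v, w} \<in> E \<or> {u, w} \<in> E)"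
  then obtain Et where dc: "decomposable_cover V E Et" and tri: "\<forall>u v w. {u, v} \<in> Et \<and> {v, w} \<in> Et \<and> {u, w} \<in> Et \<longrightarrow>
          {u, v} \<in> E \<or> {v, w} \<in> E \<or> {u, w} \<in> E" by blast
  have gEt: "is_graph V Et" and NC: "\<forall>cs. \<not> induced_cycle V Et cs" and EEt: "E \<subseteq> Et"
    using dc by (auto simp: decomposable_cover_def decomposable_def)
  have noloop: "\<forall>z. {z} \<notin> Et" using gEt by (auto simp: is_graph_def)
  have fV: "finite V" using assms by (simp add: is_graph_def)
  obtain \<sigma> where bij: "bij_betw \<sigma> V {1..card V}" and
    peo: "\<forall>v\<in>V. \<forall>a\<in>V. \<forall>b\<in>V. a \<noteq> b \<and> \<sigma> a > \<sigma> v \<and> \<sigma> b > \<sigma> v \<and> {v,a} \<in> Et \<and> {v,b} \<in> Et \<longrightarrow> {a,b} \<in> Et"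
    using peo_exists[OF noloop NC fV] by blast
  have DEt: "D_sigma V \<sigma> E \<subseteq> Et" unfolding D_sigma_def
    by (rule elim_sub_Et[OF EEt bij peo]) simp
  show "generalized_bartlett V E"
    unfolding generalized_bartlett_def is_ordering_def
    using bij DEt tri by blast
qed

end
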